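(* Let $\Lambda$ be an essential row-finite 2-graph and let $\mathcal G=\{\mathcal G^j_v: v\in\Lambda^0, 1\le j\le m(v)\}$ be an insplitting partition of its 1-skeleton satisfying the pairing condition. Then the quotient $\Lambda_I=G_I^*/\sim_I$ of the path category of the insplit 2-colored graph $G_I$ is a 2-graph.
   Context: A 2-graph is a countable category $\Lambda$ with a functor $d:\Lambda\to\mathbb N^2$ with unique factorization (if $d(\lambda)=m+n$ there are unique $\mu,\nu$ with $d(\mu)=m,d(\nu)=n,\lambda=\mu\nu$; composition $\mu\nu$ when $s(\mu)=r(\nu)$). $\Lambda^m=d^{-1}(m)$, $\Lambda^0$ are the vertices, $\Lambda^1=\Lambda^{\varepsilon_1}\sqcup\Lambda^{\varepsilon_2}$; row-finite: $v\Lambda^m$ finite; essential: $v\Lambda^m$ and $\Lambda^mv$ nonempty for all $v,m$. The 1-skeleton is the 2-colored graph $G=(\Lambda^0,\Lambda^1,r,s)$; $\Lambda$ is the quotient of its path category by the relation $\sim$ generated by commuting squares $fg\sim ab$ (two-colored paths equal in $\Lambda$). An insplitting partition: for each $v\in\Lambda^0$, a partition of $v\Lambda^1=r^{-1}(v)\cap\Lambda^1$ into nonempty sets $\mathcal G^1_v,\dots,\mathcal G^{m(v)}_v$, satisfying the pairing condition: whenever $a,f\in v\Lambda^1$ and there exist edges $g,b$ with $ag\sim fb$, then $f\in\mathcal G^j_v$ iff $a\in\mathcal G^j_v$. The insplit 2-colored graph $G_I$: vertices $v^i$ ($1\le i\le m(v)$); edges $f^i$ ($f\in\Lambda^1$,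 $1\le i\le m(s(f))$), color $d(f^i)=d(f)$, $s(f^i)=s(f)^i$, $r(f^i)=r(f)^j$ where $f\in\mathcal G^j_{r(f)}$. $\sim_I$ is the equivalence relation on paths of $G_I$ (each vertex/edge equivalent only to itself, compatible with concatenation) generated by the commuting squares $f^ig^k\sim_I a^jb^k$ iff $g\in\mathcal G^i_{s(f)}$, $b\in\mathcal G^j_{s(a)}$ and $fg\sim ab$ in $\Lambda$. *)

theory Defs
  imports Main "HOL-Library.Product_Plus" "HOL-Library.Countable_Set"
begin

text \<open>A 2-graph is given by its set of morphisms M, range and source maps r, s
(sending a morphism to the identity morphism at its range / source object),
composition cmp (meaningful when s x = r y), and a degree functor d into N^2
(represented as nat * nat with componentwise addition). Objects are identified with
identity morphisms.\<close>

definition is_2graph ::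
  "'m set \<Rightarrow> ('m \<Rightarrow> 'm) \<Rightarrow> ('m \<Rightarrow> 'm) \<Rightarrow> ('m \<Rightarrow> 'm \<Rightarrow> 'm) \<Rightarrow> ('m \<Rightarrow> nat \<times> nat) \<Rightarrow> bool"
where
  "is_2graph M r s cmp d \<longleftrightarrow>
     countable M \<and>
     (\<forall>x\<in>M. r x \<in> M \<and> s x \<in> M \<and> r (r x) = r x \<and> s (r x) = r x
              \<and> r (s x) = s x \<and> s (s x) = s x) \<and>
     (\<forall>x\<in>M. \<forall>y\<in>M. s x = r y \<longrightarrow>
         cmp x y \<in> M \<and> r (cmp x y) = r x \<and> s (cmp x y) = s y) \<and>
     (\<forall>x\<in>M. \<forall>y\<in>M. \<forall>z\<in>M. s x = r y \<and> s y = r z \<longrightarrow>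
         cmp (cmp x y) z = cmp x (cmp y z)) \<and>
     (\<forall>x\<in>M. cmp (r x) x = x \<and> cmp x (s x) = x) \<and>
     (\<forall>x\<in>M. d (r x) = 0) \<and>
     (\<forall>x\<in>M. \<forall>y\<in>M. s x = r y \<longrightarrow> d (cmp x y) = d x + d y) \<and>
     (\<forall>x\<in>M. \<forall>m n. d x = m + n \<longrightarrow>
         (\<exists>!p. fst p \<in> M \<and> snd p \<in> M \<and> s (fst p) = r (snd p) \<and>
               d (fst p) = m \<and> d (snd p) = n \<and> cmp (fst p) (snd p) = x))"

definition deg_set :: "'m set \<Rightarrow> ('m \<Rightarrow> nat \<times> nat) \<Rightarrow> nat \<times> nat \<Rightarrow> 'm set" where
  "deg_set M d n = {x\<in>M. d x = n}"

definition verts :: "'m set \<Rightarrow> ('m \<Rightarrow> nat \<times> nat) \<Rightarrow> 'm set" where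
  "verts M d = deg_set M d (0, 0)"

definition edges :: "'m set \<Rightarrow> ('m \<Rightarrow> nat \<times> nat) \<Rightarrow> 'm set" where
  "edges M d = deg_set M d (1, 0) \<union> deg_set M d (0, 1)"

definition row_finite ::
  "'m set \<Rightarrow> ('m \<Rightarrow> 'm) \<Rightarrow> ('m \<Rightarrow> nat \<times> nat) \<Rightarrow> bool" where
  "row_finite M r d \<longleftrightarrow> (\<forall>v\<in>verts M d. \<forall>n. finite {x\<in>deg_set M d n. r x = v})"

definition essential ::
  "'m set \<Rightarrow> ('m \<Rightarrow> 'm) \<Rightarrow> ('m \<Rightarrow> 'm) \<Rightarrow> ('m \<Rightarrow> nat \<times> nat) \<Rightarrow> bool" where
  "essential M r s d \<longleftrightarrow> (\<forall>v\<in>verts M d. \<forall>n.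
      {x\<in>deg_set M d n. r x = v} \<noteq> {} \<and> {x\<in>deg_set M d n. s x = v} \<noteq> {})"

text \<open>The partition is given by the number of blocks mm v and the blocks G v j, 1 \<le> j \<le> mm v,
of v Lambda^1 = r^{-1}(v) \<inter> Lambda^1.\<close>

definition in_edges :: "'m set \<Rightarrow> ('m \<Rightarrow> 'm) \<Rightarrow> ('m \<Rightarrow> nat \<times> nat) \<Rightarrow> 'm \<Rightarrow> 'm set" where
  "in_edges M r d v = {f\<in>edges M d. r f = v}"

definition insplit_partition ::
  "'m set \<Rightarrow> ('m \<Rightarrow> 'm) \<Rightarrow> ('m \<Rightarrow> nat \<times> nat) \<Rightarrow> ('m \<Rightarrow> nat) \<Rightarrow> ('m \<Rightarrow> nat \<Rightarrow> 'm set) \<Rightarrow> bool"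
where
  "insplit_partition M r d mm G \<longleftrightarrow> (\<forall>v\<in>verts M d.
      (\<forall>j\<in>{1..mm v}. G v j \<noteq> {} \<and> G v j \<subseteq> in_edges M r d v) \<and>
      (\<forall>j\<in>{1..mm v}. \<forall>k\<in>{1..mm v}. j \<noteq> k \<longrightarrow> G v j \<inter> G v k = {}) \<and>
      (\<Union>j\<in>{1..mm v}. G v j) = in_edges M r d v)"

definition pairing_condition ::
  "'m set \<Rightarrow> ('m \<Rightarrow> 'm) \<Rightarrow> ('m \<Rightarrow> 'm) \<Rightarrow> ('m \<Rightarrow> 'm \<Rightarrow> 'm) \<Rightarrow> ('m \<Rightarrow> nat \<times> nat)
     \<Rightarrow> ('m \<Rightarrow> nat) \<Rightarrow> ('m \<Rightarrow> nat \<Rightarrow> 'm set) \<Rightarrow> bool"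
where
  "pairing_condition M r s cmp d mm G \<longleftrightarrow> (\<forall>v\<in>verts M d.
      \<forall>a\<in>in_edges M r d v. \<forall>f\<in>in_edges M r d v.
        (\<exists>g\<in>edges M d. \<exists>b\<in>edges M d. s a = r g \<and> s f = r b \<and> cmp a g = cmp f b) \<longrightarrow>
        (\<forall>j\<in>{1..mm v}. f \<in> G v j \<longleftrightarrow> a \<in> G v j))"

definition blk :: "('m \<Rightarrow> 'm) \<Rightarrow> ('m \<Rightarrow> nat) \<Rightarrow> ('m \<Rightarrow> nat \<Rightarrow> 'm set) \<Rightarrow> 'm \<Rightarrow> nat" where
  "blk r mm G f = (THE j. j \<in> {1..mm (r f)} \<and> f \<in> G (r f) j)"

text \<open>A path is a pair (v, es): v is its range vertex, es the list of edges e1 ... ek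
(read left to right, composition order) with s(e_i) = r(e_{i+1}) and r(e1) = v.
The empty list gives the vertex path at v.\<close>

type_synonym ('v, 'e) path = "'v \<times> 'e list"

definition valid_path ::
  "'v set \<Rightarrow> 'e set \<Rightarrow> ('e \<Rightarrow> 'v) \<Rightarrow> ('e \<Rightarrow> 'v) \<Rightarrow> ('v, 'e) path \<Rightarrow> bool" where
  "valid_path V E rE sE p \<longleftrightarrow> fst p \<in> V \<and> set (snd p) \<subseteq> E \<and>
     (snd p \<noteq> [] \<longrightarrow> rE (hd (snd p)) = fst p) \<and>
     (\<forall>i. Suc i < length (snd p) \<longrightarrow> sE (snd p ! i) = rE (snd p ! Suc i))"

definition path_src :: "('e \<Rightarrow> 'v) \<Rightarrow> ('v, 'e) path \<Rightarrow> 'v" where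
  "path_src sE p = (if snd p = [] then fst p else sE (last (snd p)))"

definition path_cat :: "('v, 'e) path \<Rightarrow> ('v, 'e) path \<Rightarrow> ('v, 'e) path" where
  "path_cat p q = (fst p, snd p @ snd q)"

definition path_deg :: "('e \<Rightarrow> nat \<times> nat) \<Rightarrow> ('v, 'e) path \<Rightarrow> nat \<times> nat" where
  "path_deg dE p = sum_list (map dE (snd p))"

definition sq_step ::
  "'v set \<Rightarrow> 'e set \<Rightarrow> ('e \<Rightarrow> 'v) \<Rightarrow> ('e \<Rightarrow> 'v) \<Rightarrow> ('e list \<times> 'e list) set
     \<Rightarrow> ('v, 'e) path \<Rightarrow> ('v, 'e) path \<Rightarrow> bool" where
  "sq_step V E rE sE Sq p q \<longleftrightarrow> valid_path V E rE sE p \<and> valid_path V E rE sE q \<and>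
     fst p = fst q \<and>
     (\<exists>xs ys a b. ((a, b) \<in> Sq \<or> (b, a) \<in> Sq) \<and> snd p = xs @ a @ ys \<and> snd q = xs @ b @ ys)"

definition sq_equiv ::
  "'v set \<Rightarrow> 'e set \<Rightarrow> ('e \<Rightarrow> 'v) \<Rightarrow> ('e \<Rightarrow> 'v) \<Rightarrow> ('e list \<times> 'e list) set
     \<Rightarrow> ('v, 'e) path \<Rightarrow> ('v, 'e) path \<Rightarrow> bool" where
  "sq_equiv V E rE sE Sq = (sq_step V E rE sE Sq)\<^sup>*\<^sup>*"

definition pclass ::
  "'v set \<Rightarrow> 'e set \<Rightarrow> ('e \<Rightarrow> 'v) \<Rightarrow> ('e \<Rightarrow> 'v) \<Rightarrow> ('e list \<times> 'e list) set
     \<Rightarrow> ('v, 'e) path \<Rightarrow> ('v, 'e) path set" where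
  "pclass V E rE sE Sq p = {q. sq_equiv V E rE sE Sq p q}"

text \<open>The quotient category G^*/~ : morphisms are equivalence classes of valid paths;
operations are computed on (arbitrary) representatives.\<close>

definition quot_mor ::
  "'v set \<Rightarrow> 'e set \<Rightarrow> ('e \<Rightarrow> 'v) \<Rightarrow> ('e \<Rightarrow> 'v) \<Rightarrow> ('e list \<times> 'e list) set
     \<Rightarrow> ('v, 'e) path set set" where
  "quot_mor V E rE sE Sq = pclass V E rE sE Sq ` {p. valid_path V E rE sE p}"

definition quot_r ::
  "'v set \<Rightarrow> 'e set \<Rightarrow> ('e \<Rightarrow> 'v) \<Rightarrow> ('e \<Rightarrow> 'v) \<Rightarrow> ('e list \<times> 'e list) set
     \<Rightarrow> ('v, 'e) path set \<Rightarrow> ('v, 'e) path set" where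
  "quot_r V E rE sE Sq C = pclass V E rE sE Sq (fst (SOME p. p \<in> C), [])"

definition quot_s ::
  "'v set \<Rightarrow> 'e set \<Rightarrow> ('e \<Rightarrow> 'v) \<Rightarrow> ('e \<Rightarrow> 'v) \<Rightarrow> ('e list \<times> 'e list) set
     \<Rightarrow> ('v, 'e) path set \<Rightarrow> ('v, 'e) path set" where
  "quot_s V E rE sE Sq C = pclass V E rE sE Sq (path_src sE (SOME p. p \<in> C), [])"

definition quot_comp ::
  "'v set \<Rightarrow> 'e set \<Rightarrow> ('e \<Rightarrow> 'v) \<Rightarrow> ('e \<Rightarrow> 'v) \<Rightarrow> ('e list \<times> 'e list) set
     \<Rightarrow> ('v, 'e) path set \<Rightarrow> ('v, 'e) path set \<Rightarrow> ('v, 'e) path set" where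
  "quot_comp V E rE sE Sq C D =
     pclass V E rE sE Sq (path_cat (SOME p. p \<in> C) (SOME q. q \<in> D))"

definition quot_deg ::
  "('e \<Rightarrow> nat \<times> nat) \<Rightarrow> ('v, 'e) path set \<Rightarrow> nat \<times> nat" where
  "quot_deg dE C = path_deg dE (SOME p. p \<in> C)"

text \<open>Vertices v^i and edges f^i are encoded as pairs (v, i) and (f, i).\<close>

definition VI :: "'m set \<Rightarrow> ('m \<Rightarrow> nat \<times> nat) \<Rightarrow> ('m \<Rightarrow> nat) \<Rightarrow> ('m \<times> nat) set" where
  "VI M d mm = {(v, i). v \<in> verts M d \<and> 1 \<le> i \<and> i \<le> mm v}"

definition EI :: "'m set \<Rightarrow> ('m \<Rightarrow> 'm) \<Rightarrow> ('m \<Rightarrow> nat \<times> nat) \<Rightarrow> ('m \<Rightarrow> nat) \<Rightarrow> ('m \<times> nat) set" where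
  "EI M s d mm = {(f, i). f \<in> edges M d \<and> 1 \<le> i \<and> i \<le> mm (s f)}"

definition rI :: "('m \<Rightarrow> 'm) \<Rightarrow> ('m \<Rightarrow> nat) \<Rightarrow> ('m \<Rightarrow> nat \<Rightarrow> 'm set) \<Rightarrow> 'm \<times> nat \<Rightarrow> 'm \<times> nat" where
  "rI r mm G e = (r (fst e), blk r mm G (fst e))"

definition sI :: "('m \<Rightarrow> 'm) \<Rightarrow> 'm \<times> nat \<Rightarrow> 'm \<times> nat" where
  "sI s e = (s (fst e), snd e)"

definition dI :: "('m \<Rightarrow> nat \<times> nat) \<Rightarrow> 'm \<times> nat \<Rightarrow> nat \<times> nat" where
  "dI d e = d (fst e)"

text \<open>f^i g^k ~_I a^j b^k iff g \<in> G^i_{s(f)}, b \<in> G^j_{s(a)} and fg = ab in Lambda.\<close>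
definition SqI ::
  "'m set \<Rightarrow> ('m \<Rightarrow> 'm) \<Rightarrow> ('m \<Rightarrow> 'm) \<Rightarrow> ('m \<Rightarrow> 'm \<Rightarrow> 'm) \<Rightarrow> ('m \<Rightarrow> nat \<times> nat)
     \<Rightarrow> ('m \<Rightarrow> nat) \<Rightarrow> ('m \<Rightarrow> nat \<Rightarrow> 'm set) \<Rightarrow> (('m \<times> nat) list \<times> ('m \<times> nat) list) set"
where
  "SqI M r s cmp d mm G =
     {([(f, i), (g, k)], [(a, j), (b, k)]) | f g a b i j k.
        f \<in> edges M d \<and> g \<in> edges M d \<and> a \<in> edges M d \<and> b \<in> edges M d \<and>
        s f = r g \<and> s a = r b \<and> cmp f g = cmp a b \<and>
        i \<in> {1..mm (s f)} \<and> g \<in> G (s f) i \<and>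
        j \<in> {1..mm (s a)} \<and> b \<in> G (s a) j \<and>
        1 \<le> k \<and> k \<le> mm (s g)}"

end

theory Submission
  imports Defs
begin

locale L2 =
  fixes M :: "'m set" and r s :: "'m \<Rightarrow> 'm" and cmp :: "'m \<Rightarrow> 'm \<Rightarrow> 'm"
    and d :: "'m \<Rightarrow> nat \<times> nat" and mm :: "'m \<Rightarrow> nat" and G :: "'m \<Rightarrow> nat \<Rightarrow> 'm set"
  assumes TG: "is_2graph M r s cmp d"
    and IP: "insplit_partition M r d mm G"
    and PC: "pairing_condition M r s cmp d mm G"
begin

lemma rM: "x \<in> M \<Longrightarrow> r x \<in> M" and sM: "x \<in> M \<Longrightarrow> s x \<in> M"
  and r_r: "x \<in> M \<Longrightarrow> r (r x) = r x" and s_r: "x \<in> M \<Longrightarrow> s (r x) = r x"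
  and r_s: "x \<in> M \<Longrightarrow> r (s x) = s x" and s_s: "x \<in> M \<Longrightarrow> s (s x) = s x"
  using TG unfolding is_2graph_def by blast+

lemma cmpM: "x \<in> M \<Longrightarrow> y \<in> M \<Longrightarrow> s x = r y \<Longrightarrow> cmp x y \<in> M"
  and r_cmp: "x \<in> M \<Longrightarrow> y \<in> M \<Longrightarrow> s x = r y \<Longrightarrow> r (cmp x y) = r x"
  and s_cmp: "x \<in> M \<Longrightarrow> y \<in> M \<Longrightarrow> s x = r y \<Longrightarrow> s (cmp x y) = s y"
  and d_cmp: "x \<in> M \<Longrightarrow> y \<in> M \<Longrightarrow> s x = r y \<Longrightarrow> d (cmp x y) = d x + d y"
  using TG unfolding is_2graph_def by blast+

lemma assoc: "x \<in> M \<Longrightarrow> y \<in> M \<Longrightarrow> z \<in> M \<Longrightarrow> s x = r y \<Longrightarrow> s y = r z \<Longrightarrow>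
   cmp (cmp x y) z = cmp x (cmp y z)"
  using TG unfolding is_2graph_def by blast

lemma idl: "x \<in> M \<Longrightarrow> cmp (r x) x = x" and idr: "x \<in> M \<Longrightarrow> cmp x (s x) = x"
  and d_r: "x \<in> M \<Longrightarrow> d (r x) = 0"
  using TG unfolding is_2graph_def by blast+

definition facP where
  "facP x m n p \<longleftrightarrow> fst p \<in> M \<and> snd p \<in> M \<and> s (fst p) = r (snd p) \<and>
               d (fst p) = m \<and> d (snd p) = n \<and> cmp (fst p) (snd p) = x"

lemma fact_ex1: "x \<in> M \<Longrightarrow> d x = m + n \<Longrightarrow> \<exists>!p. facP x m n p"
  using TG unfolding is_2graph_def facP_def by blast

definition fac where "fac x m n = (THE p. facP x m n p)"

lemma fac: "x \<in> M \<Longrightarrow> d x = m + n \<Longrightarrow> facP x m n (fac x m n)"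
  unfolding fac_def by (rule theI', rule fact_ex1)

lemma fac_eq: "x \<in> M \<Longrightarrow> d x = m + n \<Longrightarrow> facP x m n p \<Longrightarrow> fac x m n = p"
  unfolding fac_def by (rule the1_equality, rule fact_ex1)

lemma fac_uniq: "x \<in> M \<Longrightarrow> d x = m + n \<Longrightarrow> facP x m n p \<Longrightarrow> facP x m n q \<Longrightarrow> p = q"
  using fact_ex1 by blast

lemma d_s: "x \<in> M \<Longrightarrow> d (s x) = 0"
  by (metis d_r r_s sM)

lemma vert: assumes "x \<in> M" "d x = 0" shows "r x = x" "s x = x"
proof -
  have "facP x 0 0 (r x, x)" "facP x 0 0 (x, s x)"
    using assms by (auto simp: facP_def rM sM s_r r_s idl idr d_r d_s)
  then have "(r x, x) = (x, s x)" using fac_uniq[OF assms(1), of 0 0 "(r x, x)" "(x, s x)"] assms(2) by simp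
  then show "r x = x" "s x = x" by auto
qed

lemma verts_iff: "v \<in> verts M d \<longleftrightarrow> v \<in> M \<and> d v = 0"
  by (simp add: verts_def deg_set_def zero_prod_def)

lemma edges_iff: "f \<in> edges M d \<longleftrightarrow> f \<in> M \<and> (d f = (1,0) \<or> d f = (0,1))"
  by (auto simp: edges_def deg_set_def)

lemma r_vert: "x \<in> M \<Longrightarrow> r x \<in> verts M d"
  by (simp add: verts_iff rM d_r)
lemma s_vert: "x \<in> M \<Longrightarrow> s x \<in> verts M d"
  by (simp add: verts_iff sM d_s)

lemma blk: assumes "f \<in> edges M d"
  shows "blk r mm G f \<in> {1..mm (r f)} \<and> f \<in> G (r f) (blk r mm G f)"
proof -
  have v: "r f \<in> verts M d" using assms edges_iff r_vert by blast
  have fi: "f \<in> in_edges M r d (r f)" using assms by (simp add: in_edges_def)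
  from IP v have cov: "(\<Union>j\<in>{1..mm (r f)}. G (r f) j) = in_edges M r d (r f)"
    and dis: "\<forall>j\<in>{1..mm (r f)}. \<forall>k\<in>{1..mm (r f)}. j \<noteq> k \<longrightarrow> G (r f) j \<inter> G (r f) k = {}"
    unfolding insplit_partition_def by blast+
  from cov fi obtain j where j: "j \<in> {1..mm (r f)}" "f \<in> G (r f) j" by blast
  have "\<exists>!j. j \<in> {1..mm (r f)} \<and> f \<in> G (r f) j"
    using j dis by blast
  then show ?thesis unfolding blk_def by (rule theI')
qed

lemma blk_eq: "f \<in> edges M d \<Longrightarrow> j \<in> {1..mm (r f)} \<Longrightarrow> f \<in> G (r f) j \<Longrightarrow> blk r mm G f = j"
proof -
  assume f: "f \<in> edges M d" and j: "j \<in> {1..mm (r f)}" "f \<in> G (r f) j"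
  have v: "r f \<in> verts M d" using f edges_iff r_vert by blast
  from IP v have dis: "\<forall>j\<in>{1..mm (r f)}. \<forall>k\<in>{1..mm (r f)}. j \<noteq> k \<longrightarrow> G (r f) j \<inter> G (r f) k = {}"
    unfolding insplit_partition_def by blast
  show ?thesis using blk[OF f] j dis by blast
qed

abbreviation "V \<equiv> VI M d mm"
abbreviation "E \<equiv> EI M s d mm"
abbreviation "rE \<equiv> rI r mm G"
abbreviation "sE \<equiv> sI s"
abbreviation "Sq \<equiv> SqI M r s cmp d mm G"
abbreviation "valid \<equiv> valid_path V E rE sE"
abbreviation "eqv \<equiv> sq_equiv V E rE sE Sq"
abbreviation "cls \<equiv> pclass V E rE sE Sq"
abbreviation "psrc \<equiv> path_src sE"
abbreviation "pdeg \<equiv> path_deg (dI d)"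
abbreviation "bk \<equiv> blk r mm G"

lemma sI_pair[simp]: "sI s (f, i) = (s f, i)"
  by (simp add: sI_def)
lemma rI_pair[simp]: "rI r mm G (f, i) = (r f, blk r mm G f)"
  by (simp add: rI_def)
lemma dI_pair[simp]: "dI d (f, i) = d f"
  by (simp add: dI_def)

lemma E_iff: "(f, i) \<in> E \<longleftrightarrow> f \<in> edges M d \<and> 1 \<le> i \<and> i \<le> mm (s f)"
  by (simp add: EI_def)
lemma V_iff: "(v, i) \<in> V \<longleftrightarrow> v \<in> verts M d \<and> 1 \<le> i \<and> i \<le> mm v"
  by (simp add: VI_def)

lemma edgeM: "f \<in> edges M d \<Longrightarrow> f \<in> M"
  by (simp add: edges_iff)

lemma rE_V: "e \<in> E \<Longrightarrow> rE e \<in> V"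
  using blk[of "fst e"] by (cases e) (auto simp: E_iff V_iff r_vert edgeM)
lemma sE_V: "e \<in> E \<Longrightarrow> sE e \<in> V"
  by (cases e) (auto simp: E_iff V_iff s_vert edgeM)

lemma valid_nil: "valid (v, []) \<longleftrightarrow> v \<in> V"
  by (simp add: valid_path_def)

lemma valid_cons: "valid (v, e # es) \<longleftrightarrow> v = rE e \<and> e \<in> E \<and> valid (sE e, es)"
proof
  assume a: "valid (v, e # es)"
  then have "e \<in> E" by (simp add: valid_path_def)
  moreover have "v = rE e" using a by (simp add: valid_path_def)
  moreover have "valid (sE e, es)"
  proof -
    have ch: "\<forall>i. Suc i < length (e # es) \<longrightarrow> sE ((e#es) ! i) = rE ((e#es) ! Suc i)"
      using a by (simp add: valid_path_def)
    have "es \<noteq> [] \<longrightarrow> rE (hd es) = sE e"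
      using ch[rule_format, of 0] by (cases es) auto
    moreover have "\<forall>i. Suc i < length es \<longrightarrow> sE (es ! i) = rE (es ! Suc i)"
      using ch by (metis Suc_less_eq length_Cons nth_Cons_Suc)
    ultimately show ?thesis using a sE_V[OF \<open>e \<in> E\<close>] by (simp add: valid_path_def)
  qed
  ultimately show "v = rE e \<and> e \<in> E \<and> valid (sE e, es)" by blast
next
  assume a: "v = rE e \<and> e \<in> E \<and> valid (sE e, es)"
  have ch: "\<forall>i. Suc i < length es \<longrightarrow> sE (es ! i) = rE (es ! Suc i)"
    and hd: "es \<noteq> [] \<longrightarrow> rE (hd es) = sE e"
    using a by (simp_all add: valid_path_def)
  have "\<forall>i. Suc i < length (e # es) \<longrightarrow> sE ((e#es) ! i) = rE ((e#es) ! Suc i)"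
  proof (intro allI impI)
    fix i assume "Suc i < length (e # es)"
    then show "sE ((e#es) ! i) = rE ((e#es) ! Suc i)"
      using ch hd by (cases i) (auto simp: hd_conv_nth)
  qed
  then show "valid (v, e # es)" using a rE_V[of e] by (simp add: valid_path_def)
qed

lemma psrc_nil: "psrc (v, []) = v"
  by (simp add: path_src_def)
lemma psrc_cons: "psrc (v, e # es) = psrc (sE e, es)"
  by (simp add: path_src_def)

lemma psrc_V: "valid (v, es) \<Longrightarrow> psrc (v, es) \<in> V"
  by (induction es arbitrary: v) (auto simp: valid_nil valid_cons psrc_nil psrc_cons)

lemma valid_V: "valid p \<Longrightarrow> fst p \<in> V"
  by (simp add: valid_path_def)

primrec lamL :: "'m \<Rightarrow> ('m \<times> nat) list \<Rightarrow> 'm" where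
  "lamL v [] = v"
| "lamL v (e # es) = cmp (fst e) (lamL (s (fst e)) es)"

definition lam where "lam p = lamL (fst (fst p)) (snd p)"

lemma lam_valid: "valid (v, es) \<Longrightarrow> lamL (fst v) es \<in> M \<and> r (lamL (fst v) es) = fst v \<and>
   s (lamL (fst v) es) = fst (psrc (v, es)) \<and> d (lamL (fst v) es) = pdeg (v, es)"
proof (induction es arbitrary: v)
  case Nil
  then have "fst v \<in> verts M d" using valid_nil[of v] by (cases v) (simp add: V_iff)
  then show ?case using vert[of "fst v"] by (simp add: verts_iff psrc_nil path_deg_def)
next
  case (Cons e es)
  obtain f i where e: "e = (f, i)" by (cases e)
  from Cons.prems have v: "v = rE e" and eE: "e \<in> E" and vt: "valid (sE e, es)"
    by (simp_all add: valid_cons)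
  have f: "f \<in> M" using eE e by (simp add: E_iff edgeM)
  have IH: "lamL (s f) es \<in> M \<and> r (lamL (s f) es) = s f \<and>
     s (lamL (s f) es) = fst (psrc (sE e, es)) \<and> d (lamL (s f) es) = pdeg (sE e, es)"
    using Cons.IH[OF vt] e by simp
  have fv: "fst v = r f" using v e by simp
  show ?case using IH f fv e
    by (simp add: cmpM r_cmp s_cmp d_cmp psrc_cons path_deg_def)
qed

lemma lam_valid': "valid p \<Longrightarrow> lam p \<in> M \<and> r (lam p) = fst (fst p) \<and>
   s (lam p) = fst (psrc p) \<and> d (lam p) = pdeg p"
  using lam_valid[of "fst p" "snd p"] by (simp add: lam_def)

lemma valid_append: "valid (v, xs @ ys) \<longleftrightarrow> valid (v, xs) \<and> valid (psrc (v, xs), ys)"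
  by (induction xs arbitrary: v) (auto simp: valid_nil valid_cons psrc_nil psrc_cons dest: valid_V)

lemma psrc_append: "psrc (v, xs @ ys) = psrc (psrc (v, xs), ys)"
  by (simp add: path_src_def)

lemma pdeg_append: "pdeg (v, xs @ ys) = pdeg (v, xs) + pdeg (w, ys)"
  by (simp add: path_deg_def)

lemma lamL_append: "valid (v, xs @ ys) \<Longrightarrow>
   lamL (fst v) (xs @ ys) = cmp (lamL (fst v) xs) (lamL (fst (psrc (v, xs))) ys)"
proof (induction xs arbitrary: v)
  case Nil
  have "r (lamL (fst v) ys) = fst v" "lamL (fst v) ys \<in> M" using lam_valid[OF Nil.prems] by simp_all
  then show ?case using idl[of "lamL (fst v) ys"] by (simp add: psrc_nil)
next
  case (Cons e xs)
  obtain f i where e: "e = (f, i)" by (cases e)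
  from Cons.prems have v: "v = rE e" and eE: "e \<in> E" and vt: "valid (sE e, xs @ ys)"
    by (simp_all add: valid_cons)
  have f: "f \<in> M" using eE e by (simp add: E_iff edgeM)
  from vt have v1: "valid (sE e, xs)" and v2: "valid (psrc (sE e, xs), ys)"
    by (simp_all add: valid_append)
  have IH: "lamL (s f) (xs @ ys) = cmp (lamL (s f) xs) (lamL (fst (psrc (sE e, xs))) ys)"
    using Cons.IH[OF vt] e by simp
  have L1: "lamL (s f) xs \<in> M \<and> r (lamL (s f) xs) = s f \<and> s (lamL (s f) xs) = fst (psrc (sE e, xs))"
    using lam_valid[OF v1] e by simp
  have L2: "lamL (fst (psrc (sE e, xs))) ys \<in> M \<and> r (lamL (fst (psrc (sE e, xs))) ys) = fst (psrc (sE e, xs))"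
    using lam_valid[OF v2] by simp
  show ?case using IH L1 L2 f e
    by (simp add: psrc_cons assoc)
qed

lemma cat_valid:
  assumes "valid p" "valid q" "psrc p = fst q"
  shows "valid (path_cat p q) \<and> lam (path_cat p q) = cmp (lam p) (lam q) \<and>
    psrc (path_cat p q) = psrc q \<and> pdeg (path_cat p q) = pdeg p + pdeg q \<and> fst (path_cat p q) = fst p"
proof -
  obtain v xs where p: "p = (v, xs)" by (cases p)
  obtain w ys where q: "q = (w, ys)" by (cases q)
  have w: "w = psrc (v, xs)" using assms p q by simp
  have va: "valid (v, xs @ ys)" using assms p q w by (simp add: valid_append)
  show ?thesis using va p q w lamL_append[OF va]
    by (simp add: path_cat_def lam_def psrc_append path_deg_def)
qed

lemma Sq_props: assumes "(a, b) \<in> Sq"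
  shows "\<exists>e1 e2 e3 e4. a = [e1, e2] \<and> b = [e3, e4] \<and> sE e2 = sE e4 \<and>
     dI d e1 + dI d e2 = dI d e3 + dI d e4 \<and>
     cmp (fst e1) (fst e2) = cmp (fst e3) (fst e4) \<and>
     cmp (fst e1) (cmp (fst e2) (s (fst e2))) = cmp (fst e3) (cmp (fst e4) (s (fst e4)))"
proof -
  from assms obtain f g a' b' i j k where
    ab: "a = [(f, i), (g, k)]" "b = [(a', j), (b', k)]" and
    mem: "f \<in> edges M d" "g \<in> edges M d" "a' \<in> edges M d" "b' \<in> edges M d"
    and c: "s f = r g" "s a' = r b'" "cmp f g = cmp a' b'"
    unfolding SqI_def by blast
  have M: "f \<in> M" "g \<in> M" "a' \<in> M" "b' \<in> M" using mem by (simp_all add: edgeM)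
  have "s g = s b'" using s_cmp[of f g] s_cmp[of a' b'] M c by simp
  moreover have "d f + d g = d a' + d b'" using d_cmp[of f g] d_cmp[of a' b'] M c by simp
  moreover have "cmp g (s g) = g" "cmp b' (s b') = b'" using M idr by auto
  ultimately show ?thesis using ab c M by auto
qed

lemma step_inv: assumes "sq_step V E rE sE Sq p q"
  shows "valid p \<and> valid q \<and> fst p = fst q \<and> psrc p = psrc q \<and> pdeg p = pdeg q \<and> lam p = lam q"
proof -
  from assms obtain xs ys a b where vp: "valid p" and vq: "valid q" and f: "fst p = fst q"
    and sq: "(a, b) \<in> Sq \<or> (b, a) \<in> Sq" and pe: "snd p = xs @ a @ ys" and qe: "snd q = xs @ b @ ys"
    unfolding sq_step_def by blast
  obtain e1 e2 e3 e4 where ab: "(a = [e1, e2] \<and> b = [e3, e4]) \<or> (b = [e1, e2] \<and> a = [e3, e4])"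
    and P: "sE e2 = sE e4" "dI d e1 + dI d e2 = dI d e3 + dI d e4"
     "cmp (fst e1) (cmp (fst e2) (s (fst e2))) = cmp (fst e3) (cmp (fst e4) (s (fst e4)))"
    using sq Sq_props by blast
  obtain v where p: "p = (v, xs @ a @ ys)" using pe by (cases p) auto
  have q: "q = (v, xs @ b @ ys)" using qe f p by (cases q) auto
  let ?w = "psrc (v, xs)"
  have ps: "psrc (?w, a) = psrc (?w, b)" using ab P by (auto simp: path_src_def)
  have pd: "pdeg (?w, a) = pdeg (?w, b)" using ab P by (auto simp: path_deg_def)
  have la: "lamL (fst ?w) a = lamL (fst ?w) b" using ab P by auto
  have vpa: "valid (?w, a @ ys)" using vp p by (simp add: valid_append)
  have vqa: "valid (?w, b @ ys)" using vq q by (simp add: valid_append)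
  have "psrc p = psrc q" using p q ps by (simp add: psrc_append)
  moreover have "pdeg p = pdeg q" using p q pd by (simp add: path_deg_def)
  moreover have "lam p = lam q"
    using p q lamL_append[of v xs "a @ ys"] lamL_append[of v xs "b @ ys"] vp vq
      lamL_append[OF vpa] lamL_append[OF vqa] la ps by (simp add: lam_def)
  ultimately show ?thesis using vp vq f by simp
qed

lemma eqv_inv: "eqv p q \<Longrightarrow> valid p \<Longrightarrow>
   valid q \<and> fst p = fst q \<and> psrc p = psrc q \<and> pdeg p = pdeg q \<and> lam p = lam q"
  unfolding sq_equiv_def
proof (induction rule: rtranclp_induct)
  case base then show ?case by simp
next
  case (step y z) then show ?case using step_inv[of y z] by simp
qed

lemma step_sym: "sq_step V E rE sE Sq p q \<Longrightarrow> sq_step V E rE sE Sq q p"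
  unfolding sq_step_def by metis

lemma eqv_sym: "eqv p q \<Longrightarrow> eqv q p"
  unfolding sq_equiv_def
proof (induction rule: rtranclp_induct)
  case base then show ?case by simp
next
  case (step y z) then show ?case
    using step_sym converse_rtranclp_into_rtranclp by metis
qed

lemma eqv_trans: "eqv p q \<Longrightarrow> eqv q t \<Longrightarrow> eqv p t"
  unfolding sq_equiv_def by (rule rtranclp_trans)

lemma eqv_refl: "eqv p p"
  unfolding sq_equiv_def by simp

lemma eqv_cons: assumes "eqv p q" "valid p" "e \<in> E" "sE e = fst p"
  shows "eqv (rE e, e # snd p) (rE e, e # snd q)"
  using assms unfolding sq_equiv_def
proof (induction rule: rtranclp_induct)
  case base then show ?case by simp
next
  case (step y z)
  have yv: "valid y" "fst y = fst p" using eqv_inv[OF step.hyps(1)[folded sq_equiv_def] step.prems(1)] by simp_all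
  have zv: "valid z" "fst z = fst y" using step_inv[OF step.hyps(2)] by simp_all
  have "sq_step V E rE sE Sq (rE e, e # snd y) (rE e, e # snd z)"
  proof -
    from step.hyps(2) obtain xs ys a b where
      sq: "(a, b) \<in> Sq \<or> (b, a) \<in> Sq" and ye: "snd y = xs @ a @ ys" and ze: "snd z = xs @ b @ ys"
      unfolding sq_step_def by blast
    have v12: "valid (rE e, e # snd y)" "valid (rE e, e # snd z)"
      using yv zv step.prems by (cases y; cases z; simp add: valid_cons)+
    show ?thesis unfolding sq_step_def
    proof (intro conjI)
      show "\<exists>xs' ys' a' b'. ((a', b') \<in> Sq \<or> (b', a') \<in> Sq) \<and>
        snd (rE e, e # snd y) = xs' @ a' @ ys' \<and> snd (rE e, e # snd z) = xs' @ b' @ ys'"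
        using sq ye ze by (intro exI[of _ "e # xs"] exI[of _ ys] exI[of _ a] exI[of _ b]) simp
    qed (use v12 in simp_all)
  qed
  then show ?case using step.IH step.prems by (meson rtranclp.rtrancl_into_rtrancl)
qed

definition dg where "dg x = fst (d x) + snd (d x)"

definition fer where
  "fer x = (if 0 < fst (d x) then fac x (1,0) (d x - (1,0)) else fac x (0,1) (d x - (0,1)))"
definition fe where "fe x = fst (fer x)"
definition rest where "rest x = snd (fer x)"

lemma fer: assumes "x \<in> M" "dg x \<noteq> 0"
  shows "fe x \<in> edges M d \<and> rest x \<in> M \<and> s (fe x) = r (rest x) \<and> cmp (fe x) (rest x) = x
     \<and> dg (rest x) = dg x - 1 \<and> (0 < fst (d x) \<longrightarrow> d (fe x) = (1,0))
     \<and> (fst (d x) = 0 \<longrightarrow> d (fe x) = (0,1))"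
proof (cases "0 < fst (d x)")
  case True
  have "d x = (1,0) + (d x - (1,0))" using True by (cases "d x") simp
  from fac[OF assms(1) this] True show ?thesis
    by (cases "d x") (auto simp: facP_def fe_def rest_def fer_def dg_def edges_iff)
next
  case False
  then have "0 < snd (d x)" using assms(2) by (simp add: dg_def)
  then have "d x = (0,1) + (d x - (0,1))" using False by (cases "d x") simp
  from fac[OF assms(1) this] False show ?thesis
    by (cases "d x") (auto simp: facP_def fe_def rest_def fer_def dg_def edges_iff)
qed

lemma fer_eq: assumes "e \<in> edges M d" "\<mu> \<in> M" "s e = r \<mu>" "d e = (1,0) \<or> fst (d \<mu>) = 0"
  shows "fe (cmp e \<mu>) = e \<and> rest (cmp e \<mu>) = \<mu>"
proof -
  have eM: "e \<in> M" using assms(1) edgeM by blast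
  have dd: "d (cmp e \<mu>) = d e + d \<mu>" using d_cmp eM assms by blast
  have cM: "cmp e \<mu> \<in> M" using cmpM eM assms by blast
  show ?thesis
  proof (cases "d e = (1,0)")
    case True
    then have p: "0 < fst (d (cmp e \<mu>))" using dd by (cases "d \<mu>") simp
    have "d (cmp e \<mu>) = (1,0) + (d (cmp e \<mu>) - (1,0))" using p by (cases "d (cmp e \<mu>)") simp
    have "d \<mu> = d (cmp e \<mu>) - (1,0)" using dd True by (cases "d \<mu>") simp
    then have "fac (cmp e \<mu>) (1,0) (d (cmp e \<mu>) - (1,0)) = (e, \<mu>)"
      using True eM assms dd by (intro fac_eq) (auto simp: facP_def cM)
    then show ?thesis using p by (simp add: fe_def rest_def fer_def)
  next
    case False
    then have de: "d e = (0,1)" "fst (d \<mu>) = 0" using assms edges_iff by auto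
    then have p: "\<not> 0 < fst (d (cmp e \<mu>))" using dd by (cases "d \<mu>") simp
    have "d \<mu> = d (cmp e \<mu>) - (0,1)" using dd de by (cases "d \<mu>") simp
    then have "fac (cmp e \<mu>) (0,1) (d (cmp e \<mu>) - (0,1)) = (e, \<mu>)"
      using de eM assms dd by (intro fac_eq) (auto simp: facP_def cM)
    then show ?thesis using p by (simp add: fe_def rest_def fer_def)
  qed
qed

primrec NFn :: "nat \<Rightarrow> 'm \<Rightarrow> nat \<Rightarrow> ('m \<times> nat) \<times> ('m \<times> nat) list" where
  "NFn 0 x k = ((x, k), [])"
| "NFn (Suc n) x k = ((r x, bk (fe x)), (fe x, snd (fst (NFn n (rest x) k))) # snd (NFn n (rest x) k))"

lemma dg0: "dg x = 0 \<longleftrightarrow> d x = 0"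
  by (cases "d x") (simp add: dg_def zero_prod_def)

lemma NF_props: "x \<in> M \<Longrightarrow> dg x = n \<Longrightarrow> k \<in> {1..mm (s x)} \<Longrightarrow>
   valid (NFn n x k) \<and> lam (NFn n x k) = x \<and> psrc (NFn n x k) = (s x, k) \<and> fst (fst (NFn n x k)) = r x"
proof (induction n arbitrary: x)
  case 0
  then have "d x = 0" using dg0 by simp
  then have "r x = x" "s x = x" "x \<in> verts M d" using vert 0 verts_iff by auto
  then show ?case using 0 by (simp add: valid_nil V_iff lam_def psrc_nil)
next
  case (Suc n)
  let ?f = "fe x" and ?m = "rest x"
  have F: "?f \<in> edges M d" "?m \<in> M" "s ?f = r ?m" "cmp ?f ?m = x" "dg ?m = n"
    using fer[of x] Suc.prems by auto
  have fM: "?f \<in> M" using F edgeM by blast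
  have sm: "s ?m = s x" using s_cmp[of ?f ?m] F fM by simp
  have rx: "r x = r ?f" using r_cmp[of ?f ?m] F fM by simp
  let ?P = "NFn n ?m k"
  have IH: "valid ?P \<and> lam ?P = ?m \<and> psrc ?P = (s ?m, k) \<and> fst (fst ?P) = r ?m"
    using Suc.IH[of ?m] F Suc.prems sm by simp
  have PV: "fst ?P \<in> V" using IH valid_V by blast
  have eE: "(?f, snd (fst ?P)) \<in> E" using PV IH F by (cases "fst ?P") (simp add: V_iff E_iff)
  have sfe: "sE (?f, snd (fst ?P)) = fst ?P" using IH F by (cases "fst ?P") simp
  have vP: "valid (sE (?f, snd (fst ?P)), snd ?P)" using IH sfe by simp
  have lm: "lamL (s ?f) (snd ?P) = ?m" using IH F unfolding lam_def by metis
  have "valid (NFn (Suc n) x k)" using eE vP rx by (simp add: valid_cons)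
  moreover have "lam (NFn (Suc n) x k) = x"
    using lm F rx by (simp add: lam_def)
  moreover have "psrc (NFn (Suc n) x k) = (s x, k)"
    using IH sfe sm by (simp add: psrc_cons)
  ultimately show ?case by simp
qed

lemma pair_blk: assumes "e \<in> edges M d" "f \<in> edges M d" "a \<in> edges M d" "b \<in> edges M d"
   "s e = r f" "s a = r b" "cmp e f = cmp a b"
  shows "bk a = bk e \<and> r a = r e"
proof -
  have M: "e \<in> M" "f \<in> M" "a \<in> M" "b \<in> M" using assms edgeM by auto
  have ra: "r a = r e" using r_cmp[of e f] r_cmp[of a b] M assms by simp
  have v: "r e \<in> verts M d" using M r_vert by blast
  have ie: "e \<in> in_edges M r d (r e)" "a \<in> in_edges M r d (r e)"
    using assms ra by (simp_all add: in_edges_def)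
  have "\<forall>j\<in>{1..mm (r e)}. a \<in> G (r e) j \<longleftrightarrow> e \<in> G (r e) j"
    using PC v ie assms unfolding pairing_condition_def by blast
  then have "bk a = bk e" using blk[OF assms(1)] blk[OF assms(3)] ra blk_eq[OF assms(3)] by simp
  then show ?thesis using ra by simp
qed

lemma bubble: "\<mu> \<in> M \<Longrightarrow> dg \<mu> = n \<Longrightarrow> e \<in> edges M d \<Longrightarrow> s e = r \<mu> \<Longrightarrow> k \<in> {1..mm (s \<mu>)} \<Longrightarrow>
  eqv ((r e, bk e), (e, snd (fst (NFn n \<mu> k))) # snd (NFn n \<mu> k)) (NFn (Suc n) (cmp e \<mu>) k)"
proof (induction n arbitrary: \<mu> e)
  case 0
  then have "fst (d \<mu>) = 0" by (simp add: dg_def)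
  then have "fe (cmp e \<mu>) = e \<and> rest (cmp e \<mu>) = \<mu>" using fer_eq 0 by blast
  moreover have "r (cmp e \<mu>) = r e" using r_cmp 0 edgeM by blast
  ultimately show ?case by (simp add: eqv_refl)
next
  case (Suc n)
  have eM: "e \<in> M" using Suc.prems edgeM by blast
  show ?case
  proof (cases "d e = (1,0) \<or> fst (d \<mu>) = 0")
    case True
    then have "fe (cmp e \<mu>) = e \<and> rest (cmp e \<mu>) = \<mu>" using fer_eq Suc.prems by blast
    moreover have "r (cmp e \<mu>) = r e" using r_cmp Suc.prems eM by blast
    ultimately show ?thesis by (simp add: eqv_refl)
  next
    case False
    then have de: "d e = (0,1)" and pm: "0 < fst (d \<mu>)" using Suc.prems edges_iff by auto
    let ?f = "fe \<mu>" and ?m = "rest \<mu>"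
    have F: "?f \<in> edges M d" "?m \<in> M" "s ?f = r ?m" "cmp ?f ?m = \<mu>" "dg ?m = n" "d ?f = (1,0)"
      using fer[of \<mu>] Suc.prems pm by auto
    have fM: "?f \<in> M" using F edgeM by blast
    have sm: "s ?m = s \<mu>" using s_cmp[of ?f ?m] F fM by simp
    have rmu: "r \<mu> = r ?f" using r_cmp[of ?f ?m] F fM by simp
    let ?P = "NFn n ?m k"
    let ?i' = "snd (fst ?P)"
    have NFm: "NFn (Suc n) \<mu> k = ((r \<mu>, bk ?f), (?f, ?i') # snd ?P)" by simp
    have vNF: "valid (NFn (Suc n) \<mu> k)" using NF_props[of \<mu> "Suc n" k] Suc.prems by simp
    then have fiE: "(?f, ?i') \<in> E" and vP: "valid ((s ?f, ?i'), snd ?P)"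
      using NFm by (simp_all add: valid_cons)
    have ef: "s e = r ?f" using Suc.prems rmu by simp
    have cef: "cmp e ?f \<in> M" "d (cmp e ?f) = (1,0) + (0,1)"
      using cmpM[of e ?f] d_cmp[of e ?f] eM fM ef de F by auto
    obtain a b where ab: "fac (cmp e ?f) (1,0) (0,1) = (a, b)" by (cases "fac (cmp e ?f) (1,0) (0,1)")
    have abP: "a \<in> M" "b \<in> M" "s a = r b" "d a = (1,0)" "d b = (0,1)" "cmp a b = cmp e ?f"
      using fac[OF cef] ab by (simp_all add: facP_def)
    have abE: "a \<in> edges M d" "b \<in> edges M d" using abP by (simp_all add: edges_iff)
    have PB: "bk a = bk e \<and> r a = r e"
      using pair_blk[of e ?f a b] Suc.prems F abE abP ef by simp
    have sb: "s b = s ?f" using s_cmp[of e ?f] s_cmp[of a b] abP eM fM ef by simp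
    let ?X = "((r e, bk e), (e, bk ?f) # (?f, ?i') # snd ?P)"
    let ?Y = "((r e, bk e), (a, bk b) # (b, ?i') # snd ?P)"
    have bkf: "bk ?f \<in> {1..mm (s e)}" "?f \<in> G (s e) (bk ?f)" using blk[OF F(1)] ef by auto
    have bkb: "bk b \<in> {1..mm (s a)}" "b \<in> G (s a) (bk b)" using blk[OF abE(2)] abP by auto
    have i'r: "1 \<le> ?i'" "?i' \<le> mm (s ?f)" using fiE by (simp_all add: E_iff)
    have vX: "valid ?X"
      using Suc.prems bkf fiE vP ef by (simp add: valid_cons E_iff)
    have vZ: "valid ((r b, bk b), (b, ?i') # snd ?P)"
      using abE i'r vP sb by (simp add: valid_cons E_iff)
    have vY: "valid ?Y"
      using PB abE bkb vZ abP by (simp add: valid_cons E_iff)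
    have sq: "([(e, bk ?f), (?f, ?i')], [(a, bk b), (b, ?i')]) \<in> Sq"
      unfolding SqI_def using Suc.prems F abE abP ef bkf bkb i'r by auto
    have stepXY: "sq_step V E rE sE Sq ?X ?Y"
      unfolding sq_step_def using vX vY sq
      apply (intro conjI, simp, simp, simp)
      apply (rule exI[of _ "[]"], rule exI[of _ "snd ?P"], rule exI[of _ "[(e, bk ?f), (?f, ?i')]"],
          rule exI[of _ "[(a, bk b), (b, ?i')]"])
      by simp
    have XY: "eqv ?X ?Y" using stepXY unfolding sq_equiv_def by blast
    let ?Q = "NFn (Suc n) (cmp b ?m) k"
    have bm: "s b = r ?m" using sb F by simp
    have IH: "eqv ((r b, bk b), (b, ?i') # snd ?P) ?Q"
      using Suc.IH[of ?m b] F abE bm Suc.prems sm by simp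
    have fQ: "fst ?Q = (r b, bk b)" using eqv_inv[OF IH vZ] by simp
    have YQ: "eqv ?Y ((r e, bk e), (a, bk b) # snd ?Q)"
      using eqv_cons[OF IH vZ, of "(a, bk b)"] abE bkb abP PB by (simp add: E_iff)
    have bmM: "cmp b ?m \<in> M" using cmpM abP F bm by blast
    have rbm: "r (cmp b ?m) = r b" using r_cmp abP F bm by blast
    have ecomp: "cmp e \<mu> = cmp a (cmp b ?m)"
    proof -
      have "cmp e \<mu> = cmp e (cmp ?f ?m)" using F by simp
      also have "\<dots> = cmp (cmp e ?f) ?m" using assoc[of e ?f ?m] eM fM F ef by simp
      also have "\<dots> = cmp (cmp a b) ?m" using abP by simp
      also have "\<dots> = cmp a (cmp b ?m)" using assoc[of a b ?m] abP F bm by simp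
      finally show ?thesis .
    qed
    have dmu: "d \<mu> = (1,0) + d ?m" using d_cmp[of ?f ?m] F fM by simp
    have dbm: "d (cmp b ?m) = (0,1) + d ?m" using d_cmp[of b ?m] abP F bm by simp
    have fr: "fe (cmp e \<mu>) = a \<and> rest (cmp e \<mu>) = cmp b ?m"
    proof -
      have "d (cmp e \<mu>) = d a + d (cmp b ?m)" using ecomp d_cmp[of a "cmp b ?m"] abP bmM rbm by simp
      then have dd: "d (cmp e \<mu>) = (1,0) + ((0,1) + d ?m)" using abP dbm by simp
      have cM: "cmp e \<mu> \<in> M" using cmpM eM Suc.prems by blast
      have p: "0 < fst (d (cmp e \<mu>))" using dd by (cases "d ?m") simp
      have "d (cmp e \<mu>) = (1,0) + (d (cmp e \<mu>) - (1,0))" using dd by (cases "d ?m") simp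
      moreover have "d (cmp b ?m) = d (cmp e \<mu>) - (1,0)" using dd dbm by (cases "d ?m") simp
      ultimately have "fac (cmp e \<mu>) (1,0) (d (cmp e \<mu>) - (1,0)) = (a, cmp b ?m)"
        using abP bmM rbm ecomp cM by (intro fac_eq) (auto simp: facP_def)
      then show ?thesis using p by (simp add: fe_def rest_def fer_def)
    qed
    have rem: "r (cmp e \<mu>) = r e" using r_cmp eM Suc.prems by blast
    have dgbm: "dg (cmp b ?m) = Suc n" using dbm F by (simp add: dg_def)
    have "((r e, bk e), (a, bk b) # snd ?Q) = NFn (Suc (Suc n)) (cmp e \<mu>) k"
      using fr rem PB fQ by simp
    then have "eqv ?X (NFn (Suc (Suc n)) (cmp e \<mu>) k)"
      using XY YQ eqv_trans by metis
    then show ?thesis using NFm by simp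
  qed
qed

definition NF where "NF x k = NFn (dg x) x k"

lemma to_NF: "valid p \<Longrightarrow> eqv p (NF (lam p) (snd (psrc p)))"
proof (induction "snd p" arbitrary: p)
  case Nil
  obtain v where p: "p = (v, [])" using Nil by (cases p) auto
  obtain v0 i where v: "v = (v0, i)" by (cases v)
  have "v0 \<in> verts M d" using Nil p v by (simp add: valid_nil V_iff)
  then have "dg v0 = 0" using dg0 verts_iff by auto
  then show ?case using p v by (simp add: NF_def lam_def psrc_nil eqv_refl)
next
  case (Cons e es)
  obtain v where p: "p = (v, e # es)" using Cons.hyps(2) by (cases p) auto
  obtain f i where e: "e = (f, i)" by (cases e)
  have v: "v = rE e" and eE: "e \<in> E" and vt: "valid (sE e, es)"
    using Cons.prems p by (simp_all add: valid_cons)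
  let ?p' = "(sE e, es)"
  let ?mu = "lam ?p'"
  let ?k = "snd (psrc ?p')"
  have IH: "eqv ?p' (NF ?mu ?k)" using Cons.hyps(1)[of ?p'] vt by simp
  have L: "?mu \<in> M \<and> r ?mu = s f \<and> s ?mu = fst (psrc ?p')" using lam_valid'[OF vt] e by simp
  have kr: "?k \<in> {1..mm (s ?mu)}" using psrc_V[OF vt] L by (cases "psrc ?p'") (simp add: V_iff)
  have fNF: "fst (NF ?mu ?k) = (s f, i)" using eqv_inv[OF IH vt] e by simp
  have C1: "eqv p (rE e, e # snd (NF ?mu ?k))"
    using eqv_cons[OF IH vt eE] p v by simp
  have fE: "f \<in> edges M d" using eE e by (simp add: E_iff)
  have B: "eqv ((r f, bk f), (f, snd (fst (NF ?mu ?k))) # snd (NF ?mu ?k)) (NFn (Suc (dg ?mu)) (cmp f ?mu) ?k)"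
    using bubble[of ?mu "dg ?mu" f ?k] L fE kr unfolding NF_def by simp
  have fM: "f \<in> M" using fE edgeM by blast
  have lp: "lam p = cmp f ?mu" using p e by (simp add: lam_def)
  have dgc: "dg (cmp f ?mu) = Suc (dg ?mu)"
    using d_cmp[of f ?mu] fM L fE by (auto simp: dg_def edges_iff)
  have ps: "psrc p = psrc ?p'" using p by (simp add: psrc_cons)
  show ?case using C1 B fNF e lp dgc ps eqv_trans unfolding NF_def by fastforce
qed

lemma eqv_iff: "valid p \<Longrightarrow> valid q \<Longrightarrow> eqv p q \<longleftrightarrow> lam p = lam q \<and> psrc p = psrc q"
  using eqv_inv[of p q] to_NF[of p] to_NF[of q] eqv_sym eqv_trans by metis

abbreviation "QM \<equiv> quot_mor V E rE sE Sq"
abbreviation "QR \<equiv> quot_r V E rE sE Sq"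
abbreviation "QS \<equiv> quot_s V E rE sE Sq"
abbreviation "QC \<equiv> quot_comp V E rE sE Sq"
abbreviation "QD \<equiv> quot_deg (dI d)"

lemma QM_iff: "x \<in> QM \<longleftrightarrow> (\<exists>p. valid p \<and> x = cls p)"
  by (auto simp: quot_mor_def)

lemma rep: "valid p \<Longrightarrow> eqv p (SOME q. q \<in> cls p)"
proof -
  have "p \<in> cls p" by (simp add: pclass_def eqv_refl)
  then have "(SOME q. q \<in> cls p) \<in> cls p" by (rule someI)
  then show "eqv p (SOME q. q \<in> cls p)" by (simp add: pclass_def)
qed

lemma rep_props: assumes "valid p"
  shows "valid (SOME q. q \<in> cls p) \<and> lam (SOME q. q \<in> cls p) = lam p \<and>
    psrc (SOME q. q \<in> cls p) = psrc p \<and> fst (SOME q. q \<in> cls p) = fst p \<and>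
    pdeg (SOME q. q \<in> cls p) = pdeg p"
  using eqv_inv[OF rep[OF assms] assms] by simp

lemma cls_eq: assumes "valid p" "valid q"
  shows "cls p = cls q \<longleftrightarrow> lam p = lam q \<and> psrc p = psrc q"
proof
  assume "cls p = cls q"
  then have "q \<in> cls p" by (simp add: pclass_def eqv_refl)
  then have "eqv p q" by (simp add: pclass_def)
  then show "lam p = lam q \<and> psrc p = psrc q" using eqv_iff assms by blast
next
  assume "lam p = lam q \<and> psrc p = psrc q"
  then have "eqv p q" using eqv_iff assms by blast
  then show "cls p = cls q" unfolding pclass_def using eqv_sym eqv_trans by blast
qed

lemma cls_fst: "valid p \<Longrightarrow> valid q \<Longrightarrow> cls p = cls q \<Longrightarrow> fst p = fst q"
proof -
  assume a: "valid p" "valid q" "cls p = cls q"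
  then have "q \<in> cls p" by (simp add: pclass_def eqv_refl)
  then have "eqv p q" by (simp add: pclass_def)
  then show ?thesis using eqv_inv a by blast
qed

lemma psrc_V': "valid p \<Longrightarrow> psrc p \<in> V"
  using psrc_V[of "fst p" "snd p"] by simp

lemma vpath: "v \<in> V \<Longrightarrow> valid (v, []) \<and> lam (v, []) = fst v \<and> psrc (v, []) = v"
  by (simp add: valid_nil lam_def psrc_nil)

lemma qr: "valid p \<Longrightarrow> QR (cls p) = cls (fst p, [])"
  using rep_props[of p] by (simp add: quot_r_def)
lemma qs: "valid p \<Longrightarrow> QS (cls p) = cls (psrc p, [])"
  using rep_props[of p] by (simp add: quot_s_def)
lemma qd: "valid p \<Longrightarrow> QD (cls p) = d (lam p)"
  using rep_props[of p] lam_valid'[of p] lam_valid'[of "SOME q. q \<in> cls p"] by (simp add: quot_deg_def)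

lemma qc: assumes "valid p" "valid q" "psrc p = fst q"
  shows "\<exists>w. valid w \<and> QC (cls p) (cls q) = cls w \<and> lam w = cmp (lam p) (lam q) \<and>
      psrc w = psrc q \<and> fst w = fst p"
proof -
  let ?p = "SOME x. x \<in> cls p" and ?q = "SOME x. x \<in> cls q"
  have P: "valid ?p" "lam ?p = lam p" "psrc ?p = psrc p" "fst ?p = fst p"
    using rep_props[OF assms(1)] by simp_all
  have Q: "valid ?q" "lam ?q = lam q" "psrc ?q = psrc q" "fst ?q = fst q"
    using rep_props[OF assms(2)] by simp_all
  have "valid (path_cat ?p ?q) \<and> lam (path_cat ?p ?q) = cmp (lam ?p) (lam ?q) \<and>
    psrc (path_cat ?p ?q) = psrc ?q \<and> fst (path_cat ?p ?q) = fst ?p"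
    using cat_valid[of ?p ?q] P Q assms by simp
  then show ?thesis using P Q by (intro exI[of _ "path_cat ?p ?q"]) (simp add: quot_comp_def)
qed

lemma vcls_eq: "u \<in> V \<Longrightarrow> v \<in> V \<Longrightarrow> cls (u, []) = cls (v, []) \<longleftrightarrow> u = v"
  using cls_eq[of "(u, [])" "(v, [])"] vpath by auto

lemma sr_eq: "valid p \<Longrightarrow> valid q \<Longrightarrow> QS (cls p) = QR (cls q) \<Longrightarrow> psrc p = fst q"
  using qs qr vcls_eq[OF psrc_V' valid_V] by simp

lemma countV: "countable V"
proof -
  have c: "countable M" using TG by (simp add: is_2graph_def)
  have sub: "V \<subseteq> M \<times> (UNIV :: nat set)" by (auto simp: VI_def verts_def deg_set_def)
  have "countable (M \<times> (UNIV :: nat set))" using c by simp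
  then show ?thesis by (rule countable_subset[OF sub])
qed

lemma countE: "countable E"
proof -
  have c: "countable M" using TG by (simp add: is_2graph_def)
  have sub: "E \<subseteq> M \<times> (UNIV :: nat set)" by (auto simp: EI_def edges_def deg_set_def)
  have "countable (M \<times> (UNIV :: nat set))" using c by simp
  then show ?thesis by (rule countable_subset[OF sub])
qed

lemma main: "is_2graph QM QR QS QC QD"
  unfolding is_2graph_def
proof (intro conjI)
  show "countable QM"
  proof -
    have sub: "{p. valid p} \<subseteq> V \<times> lists E" by (auto simp: valid_path_def)
    have "countable (V \<times> lists E)" using countV countE by simp
    then have "countable {p. valid p}" by (rule countable_subset[OF sub])
    then show ?thesis unfolding quot_mor_def by simp
  qed
next
  show "\<forall>x\<in>QM. QR x \<in> QM \<and> QS x \<in> QM \<and> QR (QR x) = QR x \<and> QS (QR x) = QR x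
              \<and> QR (QS x) = QS x \<and> QS (QS x) = QS x"
  proof
    fix x assume "x \<in> QM"
    then obtain p where p: "valid p" "x = cls p" using QM_iff by blast
    have V1: "fst p \<in> V" "psrc p \<in> V" using p valid_V psrc_V' by auto
    show "QR x \<in> QM \<and> QS x \<in> QM \<and> QR (QR x) = QR x \<and> QS (QR x) = QR x
              \<and> QR (QS x) = QS x \<and> QS (QS x) = QS x"
    proof -
      have vv: "valid (fst p, [])" "valid (psrc p, [])" using V1 vpath by auto
      have "cls (fst p, []) \<in> QM" "cls (psrc p, []) \<in> QM" using vv QM_iff by blast+
      then show ?thesis using p vv qr qs by (simp add: psrc_nil)
    qed
  qed
next
  show "\<forall>x\<in>QM. \<forall>y\<in>QM. QS x = QR y \<longrightarrow> QC x y \<in> QM \<and> QR (QC x y) = QR x \<and> QS (QC x y) = QS y"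
  proof (intro ballI impI)
    fix x y assume "x \<in> QM" "y \<in> QM" and e: "QS x = QR y"
    then obtain p q where p: "valid p" "x = cls p" and q: "valid q" "y = cls q" using QM_iff by meson
    have "psrc p = fst q" using e p q sr_eq by simp
    then obtain w where w: "valid w" "QC x y = cls w" "psrc w = psrc q" "fst w = fst p"
      using qc[OF p(1) q(1)] p q by blast
    show "QC x y \<in> QM \<and> QR (QC x y) = QR x \<and> QS (QC x y) = QS y"
    proof -
      have "cls w \<in> QM" using w(1) QM_iff by blast
      then show ?thesis using w p q qr qs by simp
    qed
  qed
next
  show "\<forall>x\<in>QM. \<forall>y\<in>QM. \<forall>z\<in>QM. QS x = QR y \<and> QS y = QR z \<longrightarrow> QC (QC x y) z = QC x (QC y z)"
  proof (intro ballI impI)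
    fix x y z assume "x \<in> QM" "y \<in> QM" "z \<in> QM" and e: "QS x = QR y \<and> QS y = QR z"
    then obtain p q t where p: "valid p" "x = cls p" and q: "valid q" "y = cls q"
      and t: "valid t" "z = cls t" using QM_iff by meson
    have pq: "psrc p = fst q" using e p q sr_eq by simp
    have qt: "psrc q = fst t" using e t q sr_eq by simp
    obtain w1 where w1: "valid w1" "QC x y = cls w1" "lam w1 = cmp (lam p) (lam q)" "psrc w1 = psrc q" "fst w1 = fst p"
      using qc[OF p(1) q(1) pq] p q by blast
    obtain w2 where w2: "valid w2" "QC (cls w1) z = cls w2" "lam w2 = cmp (lam w1) (lam t)" "psrc w2 = psrc t"
      using qc[OF w1(1) t(1)] w1 qt t by auto
    obtain w3 where w3: "valid w3" "QC y z = cls w3" "lam w3 = cmp (lam q) (lam t)" "psrc w3 = psrc t" "fst w3 = fst q"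
      using qc[OF q(1) t(1) qt] q t by blast
    obtain w4 where w4: "valid w4" "QC x (cls w3) = cls w4" "lam w4 = cmp (lam p) (lam w3)" "psrc w4 = psrc t"
      using qc[OF p(1) w3(1)] w3 pq p by auto
    have Lp: "lam p \<in> M" "s (lam p) = fst (psrc p)" using lam_valid'[OF p(1)] by auto
    have Lq: "lam q \<in> M" "r (lam q) = fst (fst q)" "s (lam q) = fst (psrc q)" using lam_valid'[OF q(1)] by auto
    have Lt: "lam t \<in> M" "r (lam t) = fst (fst t)" using lam_valid'[OF t(1)] by auto
    have "cmp (cmp (lam p) (lam q)) (lam t) = cmp (lam p) (cmp (lam q) (lam t))"
      using assoc Lp Lq Lt pq qt by simp
    then have "cls w2 = cls w4" using cls_eq[OF w2(1) w4(1)] w1 w2 w3 w4 by simp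
    then show "QC (QC x y) z = QC x (QC y z)" using w1 w2 w3 w4 by simp
  qed
next
  show "\<forall>x\<in>QM. QC (QR x) x = x \<and> QC x (QS x) = x"
  proof
    fix x assume "x \<in> QM"
    then obtain p where p: "valid p" "x = cls p" using QM_iff by blast
    have V1: "fst p \<in> V" "psrc p \<in> V" using p valid_V psrc_V' by auto
    have L: "lam p \<in> M" "r (lam p) = fst (fst p)" "s (lam p) = fst (psrc p)" using lam_valid'[OF p(1)] by auto
    obtain w where w: "valid w" "QC (cls (fst p, [])) (cls p) = cls w" "lam w = cmp (fst (fst p)) (lam p)" "psrc w = psrc p"
      using qc[of "(fst p, [])" p] vpath[OF V1(1)] p by auto
    have 1: "QC (QR x) x = x" using w p qr cls_eq[OF w(1) p(1)] idl[OF L(1)] L by simp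
    obtain w' where w': "valid w'" "QC (cls p) (cls (psrc p, [])) = cls w'" "lam w' = cmp (lam p) (fst (psrc p))" "psrc w' = psrc p"
      using qc[of p "(psrc p, [])"] vpath[OF V1(2)] p by auto
    have 2: "QC x (QS x) = x" using w' p qs cls_eq[OF w'(1) p(1)] idr[OF L(1)] L by simp
    show "QC (QR x) x = x \<and> QC x (QS x) = x" using 1 2 by simp
  qed
next
  show "\<forall>x\<in>QM. QD (QR x) = 0"
  proof
    fix x assume "x \<in> QM"
    then obtain p where p: "valid p" "x = cls p" using QM_iff by blast
    have V1: "fst p \<in> V" using p valid_V by auto
    have L: "lam p \<in> M" "r (lam p) = fst (fst p)" using lam_valid'[OF p(1)] by auto
    show "QD (QR x) = 0" using p qr qd vpath[OF V1] d_r[OF L(1)] L by simp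
  qed
next
  show "\<forall>x\<in>QM. \<forall>y\<in>QM. QS x = QR y \<longrightarrow> QD (QC x y) = QD x + QD y"
  proof (intro ballI impI)
    fix x y assume "x \<in> QM" "y \<in> QM" and e: "QS x = QR y"
    then obtain p q where p: "valid p" "x = cls p" and q: "valid q" "y = cls q" using QM_iff by meson
    have pq: "psrc p = fst q" using e p q sr_eq by simp
    then obtain w where w: "valid w" "QC x y = cls w" "lam w = cmp (lam p) (lam q)"
      using qc[OF p(1) q(1)] p q by blast
    have Lp: "lam p \<in> M" "s (lam p) = fst (psrc p)" using lam_valid'[OF p(1)] by auto
    have Lq: "lam q \<in> M" "r (lam q) = fst (fst q)" using lam_valid'[OF q(1)] by auto
    show "QD (QC x y) = QD x + QD y" using w p q qd d_cmp Lp Lq pq by simp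
  qed
next
  show "\<forall>x\<in>QM. \<forall>m n. QD x = m + n \<longrightarrow>
         (\<exists>!p. fst p \<in> QM \<and> snd p \<in> QM \<and> QS (fst p) = QR (snd p) \<and>
               QD (fst p) = m \<and> QD (snd p) = n \<and> QC (fst p) (snd p) = x)"
  proof (intro ballI allI impI)
    fix x m n assume "x \<in> QM" and dx: "QD x = m + n"
    then obtain p where p: "valid p" "x = cls p" using QM_iff by blast
    have L: "lam p \<in> M" "r (lam p) = fst (fst p)" "s (lam p) = fst (psrc p)" using lam_valid'[OF p(1)] by auto
    have dl: "d (lam p) = m + n" using dx p qd by simp
    have pV: "psrc p \<in> V" using p psrc_V' by blast
    let ?P = "\<lambda>pr. fst pr \<in> QM \<and> snd pr \<in> QM \<and> QS (fst pr) = QR (snd pr) \<and>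
               QD (fst pr) = m \<and> QD (snd pr) = n \<and> QC (fst pr) (snd pr) = x"
    have D: "\<exists>p1 q1. valid p1 \<and> valid q1 \<and> pr = (cls p1, cls q1) \<and> psrc p1 = fst q1 \<and>
        facP (lam p) m n (lam p1, lam q1) \<and> psrc q1 = psrc p" if a: "?P pr" for pr
    proof -
      have m1: "fst pr \<in> QM" and m2: "snd pr \<in> QM" using a by simp_all
      obtain p1 where p1: "valid p1" "fst pr = cls p1" using m1 QM_iff by blast
      obtain q1 where q1: "valid q1" "snd pr = cls q1" using m2 QM_iff by blast
      have "QS (cls p1) = QR (cls q1)" using a p1 q1 by simp
      then have pq: "psrc p1 = fst q1" using sr_eq[OF p1(1) q1(1)] by blast
      obtain w where w: "valid w" "QC (cls p1) (cls q1) = cls w" "lam w = cmp (lam p1) (lam q1)" "psrc w = psrc q1"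
        using qc[OF p1(1) q1(1) pq] by blast
      have "QC (cls p1) (cls q1) = cls p" using a p1 q1 p by simp
      then have "cls w = cls p" using w(2) by simp
      then have wl: "lam w = lam p" "psrc w = psrc p" using cls_eq[OF w(1) p(1)] by auto
      have Lp: "lam p1 \<in> M" "s (lam p1) = fst (psrc p1)" using lam_valid'[OF p1(1)] by auto
      have Lq: "lam q1 \<in> M" "r (lam q1) = fst (fst q1)" using lam_valid'[OF q1(1)] by auto
      have "QD (cls p1) = m" "QD (cls q1) = n" using a p1 q1 by simp_all
      then have "d (lam p1) = m" "d (lam q1) = n" using qd[OF p1(1)] qd[OF q1(1)] by simp_all
      then have fp: "facP (lam p) m n (lam p1, lam q1)"
        using Lp Lq pq w(3) wl(1) by (simp add: facP_def)
      have pr: "pr = (cls p1, cls q1)" using p1 q1 by (cases pr) simp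
      have sq: "psrc q1 = psrc p" using w(4) wl(2) by simp
      show ?thesis
        by (rule exI[of _ p1], rule exI[of _ q1]) (simp only: p1(1) q1(1) pr pq fp sq simp_thms)
    qed
    show "\<exists>!pr. ?P pr"
    proof (rule ex_ex1I)
      obtain \<mu> \<nu> where mn: "fac (lam p) m n = (\<mu>, \<nu>)" by (cases "fac (lam p) m n")
      have F: "\<mu> \<in> M" "\<nu> \<in> M" "s \<mu> = r \<nu>" "d \<mu> = m" "d \<nu> = n" "cmp \<mu> \<nu> = lam p"
        using fac[OF L(1) dl] mn by (simp_all add: facP_def)
      have snu: "s \<nu> = s (lam p)" using s_cmp[of \<mu> \<nu>] F by simp
      let ?k = "snd (psrc p)"
      have kr: "?k \<in> {1..mm (s \<nu>)}" using pV snu L by (cases "psrc p") (simp add: V_iff)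
      let ?Q2 = "NF \<nu> ?k"
      have Q2: "valid ?Q2" "lam ?Q2 = \<nu>" "psrc ?Q2 = (s \<nu>, ?k)" "fst (fst ?Q2) = r \<nu>"
        using NF_props[OF F(2) refl kr] unfolding NF_def by auto
      have fQ2: "fst ?Q2 \<in> V" using Q2 valid_V by blast
      let ?j = "snd (fst ?Q2)"
      have jr: "?j \<in> {1..mm (s \<mu>)}" using fQ2 Q2 F by (cases "fst ?Q2") (simp add: V_iff)
      let ?Q1 = "NF \<mu> ?j"
      have Q1: "valid ?Q1" "lam ?Q1 = \<mu>" "psrc ?Q1 = (s \<mu>, ?j)"
        using NF_props[OF F(1) refl jr] unfolding NF_def by auto
      have ps1: "psrc ?Q1 = fst ?Q2" using Q1 Q2 F by (cases "fst ?Q2") simp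
      obtain w where w: "valid w" "QC (cls ?Q1) (cls ?Q2) = cls w" "lam w = cmp (lam ?Q1) (lam ?Q2)" "psrc w = psrc ?Q2"
        using qc[OF Q1(1) Q2(1) ps1] by blast
      have "psrc p = (s \<nu>, ?k)" using L snu by (cases "psrc p") simp
      then have "cls w = cls p" using cls_eq[OF w(1) p(1)] w F Q2 Q1 by simp
      moreover have "cls ?Q1 \<in> QM" "cls ?Q2 \<in> QM" using Q1 Q2 QM_iff by blast+
      moreover have "QS (cls ?Q1) = QR (cls ?Q2)" using qs[OF Q1(1)] qr[OF Q2(1)] ps1 by simp
      moreover have "QD (cls ?Q1) = m" "QD (cls ?Q2) = n" using qd Q1 Q2 F by simp_all
      ultimately have "?P (cls ?Q1, cls ?Q2)" using w p by simp
      then show "\<exists>pr. ?P pr" by blast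
    next
      fix pr1 pr2 assume a1: "?P pr1" and a2: "?P pr2"
      obtain p1 q1 where A: "valid p1" "valid q1" "pr1 = (cls p1, cls q1)" "psrc p1 = fst q1"
        "facP (lam p) m n (lam p1, lam q1)" "psrc q1 = psrc p" using D[OF a1] by blast
      obtain p2 q2 where B: "valid p2" "valid q2" "pr2 = (cls p2, cls q2)" "psrc p2 = fst q2"
        "facP (lam p) m n (lam p2, lam q2)" "psrc q2 = psrc p" using D[OF a2] by blast
      have "(lam p1, lam q1) = (lam p2, lam q2)" using fac_uniq[OF L(1) dl A(5) B(5)] .
      then have "cls q1 = cls q2" using cls_eq[OF A(2) B(2)] A B by simp
      then have "fst q1 = fst q2" using cls_fst A B by blast
      then have "cls p1 = cls p2" using cls_eq[OF A(1) B(1)] A B \<open>(lam p1, lam q1) = (lam p2, lam q2)\<close> by simp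
      then show "pr1 = pr2" using A B \<open>cls q1 = cls q2\<close> by simp
    qed
  qed
qed

end

theorem theorem5p8:
  fixes M :: "'m set" and r s :: "'m \<Rightarrow> 'm" and cmp :: "'m \<Rightarrow> 'm \<Rightarrow> 'm"
    and d :: "'m \<Rightarrow> nat \<times> nat" and mm :: "'m \<Rightarrow> nat" and G :: "'m \<Rightarrow> nat \<Rightarrow> 'm set"
  assumes "is_2graph M r s cmp d"
    and "row_finite M r d"
    and "essential M r s d"
    and "insplit_partition M r d mm G"
    and "pairing_condition M r s cmp d mm G"
  shows "is_2graph
     (quot_mor (VI M d mm) (EI M s d mm) (rI r mm G) (sI s) (SqI M r s cmp d mm G))
     (quot_r (VI M d mm) (EI M s d mm) (rI r mm G) (sI s) (SqI M r s cmp d mm G))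
     (quot_s (VI M d mm) (EI M s d mm) (rI r mm G) (sI s) (SqI M r s cmp d mm G))
     (quot_comp (VI M d mm) (EI M s d mm) (rI r mm G) (sI s) (SqI M r s cmp d mm G))
     (quot_deg (dI d))"
proof -
  interpret L2 M r s cmp d mm G using assms by (unfold_locales) auto
  show ?thesis by (rule main)
qed

end
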